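(* Let $X=\mathbb{R}^K$, $N\ge2$, $I=\{1,\dots,N\}$, and let $\Phi_i\in C^1(X;\mathbb{R})$ with locally Lipschitz gradients, $i\in I$. Let $(\theta(t),\boldsymbol{i}(t))_{t\ge0}$ and $(\xi(t),\boldsymbol{j}(t))_{t\ge0}$ be the stochastic gradient processes with constant and decreasing learning rate defined in the context. Then $(\theta(t),\boldsymbol{i}(t))_{t\ge0}$ and $(\xi(t),\boldsymbol{j}(t))_{t\ge0}$ are Markov processes.
   Context: $(\boldsymbol{i}(t))$: continuous-time Markov process on $I$, $\boldsymbol{i}(0)\sim\mathrm{Unif}(I)$, rate matrix with off-diagonal entries $\lambda>0$ and diagonal entries $-(N-1)\lambda$; $\theta$ solves $\dot\theta(t)=-\nabla\Phi_{\boldsymbol{i}(t)}(\theta(t))$, $\theta(0)=\theta_0$. $(\boldsymbol{j}(t))$: time-inhomogeneous continuous-time Markov process on $I$, $\boldsymbol{j}(0)\sim\mathrm{Unif}(I)$, rate matrix with off-diagonal entries $\mu(t)$ and diagonal entries $-(N-1)\mu(t)$, where $\mu:[0,\infty)\to(0,\infty)$ is non-decreasing, continuously differentiable, $\mu(t)\to\infty$, and locally $|\mu'|\le C_{\bar t}\mu$ on $[0,\bar t]$; $\xi$ solves $\dot\xi(t)=-\nabla\Phi_{\boldsymbol{j}(t)}(\xi(t))$, $\xi(0)=\xi_0$. *)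

theory Defs
  imports "HOL-Probability.Probability"
begin

definition loc_lipschitz :: "('a::metric_space \<Rightarrow> 'b::metric_space) \<Rightarrow> bool" where
  "loc_lipschitz g \<longleftrightarrow> (\<forall>x. \<exists>r>0. \<exists>L. L-lipschitz_on (ball x r) g)"

definition natural_filtration ::
  "'w measure \<Rightarrow> 'b measure \<Rightarrow> (real \<Rightarrow> 'w \<Rightarrow> 'b) \<Rightarrow> real \<Rightarrow> 'w measure" where
  "natural_filtration M S Z s =
     sigma (space M) (\<Union>u\<in>{0..s}. (\<lambda>A. Z u -` A \<inter> space M) ` sets S)"

definition markov_process ::
  "'w measure \<Rightarrow> 'b measure \<Rightarrow> (real \<Rightarrow> 'w \<Rightarrow> 'b) \<Rightarrow> bool" where
  "markov_process M S Z \<longleftrightarrow>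
     (\<forall>t\<ge>0. Z t \<in> measurable M S) \<and>
     (\<forall>s t f. 0 \<le> s \<longrightarrow> s \<le> t \<longrightarrow> f \<in> borel_measurable S \<longrightarrow> bounded (f ` space S) \<longrightarrow>
        (AE \<omega> in M. real_cond_exp M (natural_filtration M S Z s) (\<lambda>\<omega>. f (Z t \<omega>)) \<omega> =
                     real_cond_exp M (vimage_algebra (space M) (Z s) S) (\<lambda>\<omega>. f (Z t \<omega>)) \<omega>))"

definition kolmogorov_forward ::
  "nat \<Rightarrow> (real \<Rightarrow> nat \<Rightarrow> nat \<Rightarrow> real) \<Rightarrow> (real \<Rightarrow> real \<Rightarrow> nat \<Rightarrow> nat \<Rightarrow> real) \<Rightarrow> bool" where
  "kolmogorov_forward N q p \<longleftrightarrow>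
     (\<forall>s\<ge>0. \<forall>k<N. \<forall>l<N.
        p s s k l = (if k = l then 1 else 0) \<and>
        (\<forall>t\<ge>s. ((\<lambda>t. p s t k l) has_real_derivative (\<Sum>m<N. p s t k m * q t m l))
                   (at t within {s..})))"

text \<open>Cadlag path with values in a discrete set: locally constant to the right of every
  t \<ge> 0 and with a left limit (locally constant to the left) at every t > 0.\<close>
definition cadlag_discrete :: "(real \<Rightarrow> 'b) \<Rightarrow> bool" where
  "cadlag_discrete p \<longleftrightarrow>
     (\<forall>t\<ge>0. \<exists>e>0. \<forall>u\<in>{t..<t+e}. p u = p t) \<and>
     (\<forall>t>0. \<exists>e>0. \<exists>c. \<forall>u\<in>{t-e<..<t}. p u = c)"

definition ctmc :: "'w measure \<Rightarrow> nat \<Rightarrow> (real \<Rightarrow> nat \<Rightarrow> nat \<Rightarrow> real) \<Rightarrow> (real \<Rightarrow> 'w \<Rightarrow> nat) \<Rightarrow> bool" where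
  "ctmc M N q i \<longleftrightarrow>
     (\<forall>t\<ge>0. i t \<in> measurable M (count_space UNIV)) \<and>
     (\<forall>t\<ge>0. \<forall>\<omega>\<in>space M. i t \<omega> < N) \<and>
     (\<forall>\<omega>\<in>space M. cadlag_discrete (\<lambda>t. i t \<omega>)) \<and>
     (\<forall>k<N. prob_space.prob M {\<omega>\<in>space M. i 0 \<omega> = k} = 1 / real N) \<and>
     (\<exists>p. kolmogorov_forward N q p \<and>
        (\<forall>s t l. 0 \<le> s \<longrightarrow> s \<le> t \<longrightarrow> l < N \<longrightarrow>
           (AE \<omega> in M. real_cond_exp M (natural_filtration M (count_space UNIV) i s)
                          (\<lambda>\<omega>. indicator {l} (i t \<omega>)) \<omega> = p s t (i s \<omega>) l)))"

definition uniform_rates :: "nat \<Rightarrow> real \<Rightarrow> nat \<Rightarrow> nat \<Rightarrow> real" where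
  "uniform_rates N r k l = (if k = l then - (real N - 1) * r else r)"

end

theory Submission
  imports Defs "HOL-Analysis.Analysis"
begin

lemma loc_lip_compact:
  fixes g :: "'a::euclidean_space \<Rightarrow> 'b::metric_space"
  assumes "loc_lipschitz g" "compact K"
  obtains L where "L-lipschitz_on K g"
proof -
  have ll: "local_lipschitz {0::real} K (\<lambda>_. g)"
  proof (rule local_lipschitzI)
    fix t x assume "t \<in> {0::real}" "x \<in> K"
    obtain r L where r: "r > 0" "L-lipschitz_on (ball x r) g"
      using assms(1) unfolding loc_lipschitz_def by blast
    have "L-lipschitz_on (cball x (r/2) \<inter> K) g"
      by (rule lipschitz_on_subset[OF r(2)]) (use r in auto)
    then show "\<exists>u>0. \<exists>L. \<forall>t\<in>cball t u \<inter> {0}. L-lipschitz_on (cball x u \<inter> K) g"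
      using r by (intro exI[of _ "r/2"]) auto
  qed
  obtain L where "\<And>t. t \<in> {0::real} \<Longrightarrow> L-lipschitz_on K g"
    using local_lipschitz_compact_implies_lipschitz[OF ll assms(2)] by auto
  then show ?thesis using that by blast
qed

lemma loc_lip_compact_fam:
  fixes G :: "nat \<Rightarrow> 'a::euclidean_space \<Rightarrow> 'b::metric_space"
  assumes "\<And>n. n < N \<Longrightarrow> loc_lipschitz (G n)" "compact K"
  obtains L where "L \<ge> 0" "\<And>n. n < N \<Longrightarrow> L-lipschitz_on K (G n)"
proof -
  have "\<forall>n. \<exists>L. n < N \<longrightarrow> L-lipschitz_on K (G n)"
    using loc_lip_compact[OF assms(1) assms(2)] by metis
  then obtain Lf where Lf: "\<And>n. n < N \<Longrightarrow> (Lf n)-lipschitz_on K (G n)" by metis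
  define L where "L = (\<Sum>n<N. \<bar>Lf n\<bar>)"
  have "L \<ge> 0" unfolding L_def by (simp add: sum_nonneg)
  moreover have "L-lipschitz_on K (G n)" if "n < N" for n
  proof (rule lipschitz_on_mono[OF Lf[OF that] order_refl])
    have "\<bar>Lf n\<bar> \<le> L" unfolding L_def
      using that by (intro member_le_sum) auto
    then show "Lf n \<le> L" by linarith
  qed
  ultimately show ?thesis using that by blast
qed

definition euler :: "(nat \<Rightarrow> 'a \<Rightarrow> 'a::real_vector) \<Rightarrow> real \<Rightarrow> 'a \<Rightarrow> nat list \<Rightarrow> 'a" where
  "euler F h x ls = foldl (\<lambda>x l. x - h *\<^sub>R F l x) x ls"

lemma euler_snoc: "euler F h x (ls @ [l]) = euler F h x ls - h *\<^sub>R F l (euler F h x ls)"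
  unfolding euler_def by simp

lemma floor_interval:
  fixes \<rho> s h :: real and k :: nat
  assumes "h > 0" "s + real k * h \<le> \<rho>" "\<rho> < s + real (Suc k) * h"
  shows "\<lfloor>(\<rho> - s) / h\<rfloor> = int k"
proof -
  have "real k \<le> (\<rho> - s) / h" using assms by (simp add: field_simps)
  moreover have "(\<rho> - s) / h < real k + 1" using assms by (simp add: field_simps)
  ultimately show ?thesis by (simp add: floor_eq_iff)
qed

lemma tendsto_hn: "(\<lambda>n. (c::real) / real (Suc n)) \<longlonglongrightarrow> 0"
  using LIMSEQ_Suc[OF lim_const_over_n[of c]] by simp

lemma euler_conv:
  fixes G :: "nat \<Rightarrow> 'a::euclidean_space \<Rightarrow> 'a" and c :: "real \<Rightarrow> nat" and y :: "real \<Rightarrow> 'a"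
  assumes cont: "\<And>n. n < N \<Longrightarrow> continuous_on UNIV (G n)"
    and lip: "\<And>n. n < N \<Longrightarrow> loc_lipschitz (G n)"
    and cN: "\<And>r. r \<ge> 0 \<Longrightarrow> c r < N"
    and right: "\<And>r. r \<ge> 0 \<Longrightarrow> \<exists>e>0. \<forall>u\<in>{r..<r+e}. c u = c r"
    and ode: "\<And>t. t \<ge> 0 \<Longrightarrow> ((\<lambda>r. G (c r) (y r)) has_integral (y0 - y t)) {0..t}"
    and st: "0 \<le> s" "s < t"
  shows "(\<lambda>n. euler (\<lambda>l x. if l < N then G l x else 0) ((t-s)/real (Suc n)) (y s)
            (map (\<lambda>k. c (s + real (Suc k) * ((t-s)/real (Suc n)))) [0..<Suc n])) \<longlonglongrightarrow> y t"
proof -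
  define g where "g r = G (c r) (y r)" for r
  define Gt where "Gt l x = (if l < N then G l x else 0)" for l x
  have gint0: "g integrable_on {0..b}" if "0 \<le> b" for b
    using ode[OF that] unfolding g_def by blast
  have gint: "g integrable_on {a..b}" if "0 \<le> a" "a \<le> b" for a b
    by (rule integrable_subinterval_real[OF gint0[of b]]) (use that in auto)
  have yint: "y r = y0 - integral {0..r} g" if "0 \<le> r" for r
    using integral_unique[OF ode[OF that]] unfolding g_def by simp
  have ydiff: "y b = y a - integral {a..b} g" if "0 \<le> a" "a \<le> b" for a b
  proof -
    have "integral {0..a} g + integral {a..b} g = integral {0..b} g"
      by (rule Henstock_Kurzweil_Integration.integral_combine) (use that gint0 in auto)
    then have "y b = y0 - (integral {0..a} g + integral {a..b} g)" using yint[of b] that by simp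
    also have "\<dots> = (y0 - integral {0..a} g) - integral {a..b} g" by (simp add: algebra_simps)
    finally show ?thesis using yint[of a] that by simp
  qed
  have ycont: "continuous_on {s..t} y"
  proof -
    have "continuous_on {0..t} (\<lambda>r. integral {0..r} g)"
      by (rule indefinite_integral_continuous_1[OF gint0]) (use st in auto)
    then have "continuous_on {0..t} (\<lambda>r. y0 - integral {0..r} g)"
      by (intro continuous_intros)
    then have "continuous_on {0..t} y"
      by (rule continuous_on_cong[THEN iffD1, rotated 2]) (auto simp: yint)
    then show ?thesis by (rule continuous_on_subset) (use st in auto)
  qed
  define Y where "Y = y ` {s..t}"
  have cY: "compact Y" unfolding Y_def by (rule compact_continuous_image[OF ycont compact_Icc])
  define K where "K = {a + b |a b. a \<in> Y \<and> b \<in> cball (0::'a) 1}"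
  have cK: "compact K" unfolding K_def by (rule compact_sums[OF cY compact_cball])
  have inK: "x \<in> K" if "r \<in> {s..t}" "dist x (y r) \<le> 1" for x r
  proof -
    have "x = y r + (x - y r)" by simp
    moreover have "y r \<in> Y" using that unfolding Y_def by auto
    moreover have "x - y r \<in> cball 0 1" using that by (simp add: dist_norm norm_minus_commute)
    ultimately show ?thesis unfolding K_def by blast
  qed
  have YK: "y r \<in> K" if "r \<in> {s..t}" for r using inK[OF that] by simp
  have N0: "0 < N" using cN[OF st(1)] by simp
  obtain B where B: "\<And>l x. l < N \<Longrightarrow> x \<in> K \<Longrightarrow> norm (G l x) \<le> B"
  proof -
    have "compact (\<Union>l\<in>{..<N}. G l ` K)"
      by (intro compact_UN) (auto intro!: compact_continuous_image continuous_on_subset[OF cont] cK)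
    then obtain B where "\<forall>z\<in>(\<Union>l\<in>{..<N}. G l ` K). norm z \<le> B"
      using compact_imp_bounded bounded_iff by metis
    then have "\<And>l x. l < N \<Longrightarrow> x \<in> K \<Longrightarrow> norm (G l x) \<le> B" by blast
    then show ?thesis using that by blast
  qed
  have B0: "0 \<le> B" 
  proof -
    have "s \<in> {s..t}" using st by auto
    from B[OF N0 YK[OF this]] show ?thesis by (rule order_trans[OF norm_ge_zero])
  qed
  have GtB: "norm (Gt l x) \<le> B" if "x \<in> K" for l x
  proof (cases "l < N")
    case True then show ?thesis unfolding Gt_def using B[OF True that] by simp
  next
    case False then show ?thesis unfolding Gt_def using B0 by simp
  qed
  obtain L where L0: "L \<ge> 0" and L: "\<And>l. l < N \<Longrightarrow> L-lipschitz_on K (G l)"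
  proof (rule loc_lip_compact_fam[OF lip cK])
    fix L assume "0 \<le> L" "\<And>n. n < N \<Longrightarrow> L-lipschitz_on K (G n)"
    then show thesis by (rule that)
  qed
  define h where "h n = (t - s) / real (Suc n)" for n :: nat
  have hpos: "h n > 0" for n unfolding h_def using st by simp
  define r where "r n k = s + real k * h n" for n k :: nat
  have r0: "r n 0 = s" for n unfolding r_def by simp
  have rend: "r n (Suc n) = t" for n unfolding r_def h_def by (simp add: field_simps)
  have rmono: "r n k \<le> r n k'" if "k \<le> k'" for n k k'
    unfolding r_def using hpos[of n] that by (intro add_left_mono mult_right_mono) auto
  have rin: "r n k \<in> {s..t}" if "k \<le> Suc n" for n k
    using rmono[of 0 k n] rmono[OF that, of n] r0 rend by auto
  have rSuc: "r n (Suc k) = r n k + h n" for n k unfolding r_def by (simp add: algebra_simps)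
  define cc where "cc n k = c (r n (Suc k))" for n k
  define xs where "xs n k = euler Gt (h n) (y s) (map (cc n) [0..<k])" for n k
  have xsSuc: "xs n (Suc k) = xs n k - h n *\<^sub>R Gt (cc n k) (xs n k)" for n k
    unfolding xs_def by (simp add: euler_snoc)
  have goal_eq: "euler (\<lambda>l x. if l < N then G l x else 0) ((t-s)/real (Suc n)) (y s)
            (map (\<lambda>k. c (s + real (Suc k) * ((t-s)/real (Suc n)))) [0..<Suc n]) = xs n (Suc n)" for n
    unfolding xs_def cc_def r_def h_def Gt_def[abs_def] by simp
  define gn where "gn n \<rho> = (let m = \<lfloor>(\<rho> - s) / h n\<rfloor> in
      Gt (c (s + (real_of_int m + 1) * h n)) (y (s + real_of_int m * h n)))" for n \<rho>
  define f where "f n \<rho> = norm (g \<rho> - gn n \<rho>)" for n \<rho>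
  define D where "D n = integral {s..t} (f n)" for n
  define \<delta> where "\<delta> n k = integral {r n k..r n (Suc k)} (f n)" for n k
  have gn_piece: "gn n \<rho> = Gt (cc n k) (y (r n k))" if "r n k \<le> \<rho>" "\<rho> < r n (Suc k)" for n k \<rho>
  proof -
    have "\<lfloor>(\<rho> - s) / h n\<rfloor> = int k"
      by (rule floor_interval[OF hpos]) (use that in \<open>auto simp: r_def\<close>)
    then show ?thesis unfolding gn_def cc_def r_def by (simp add: algebra_simps)
  qed
  have gB: "norm (g \<rho>) \<le> B" if "\<rho> \<in> {s..t}" for \<rho>
    using B[OF cN YK[OF that]] that st unfolding g_def by auto
  have gnB: "norm (gn n \<rho>) \<le> B" if "\<rho> \<in> {s..t}" for n \<rho>
  proof -
    define m where "m = \<lfloor>(\<rho> - s) / h n\<rfloor>"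
    have "0 \<le> (\<rho> - s) / h n" using that hpos[of n] by auto
    then have m0: "0 \<le> real_of_int m" unfolding m_def by simp
    have "real_of_int m \<le> (\<rho> - s) / h n" unfolding m_def by simp
    then have "real_of_int m * h n \<le> \<rho> - s" using hpos[of n] by (simp add: field_simps)
    then have "s + real_of_int m * h n \<in> {s..t}" using that m0 hpos[of n] by auto
    then show ?thesis unfolding gn_def m_def[symmetric] Let_def by (intro GtB YK)
  qed
  have fB: "norm (f n \<rho>) \<le> 2 * B" if "\<rho> \<in> {s..t}" for n \<rho>
  proof -
    have "norm (g \<rho> - gn n \<rho>) \<le> norm (g \<rho>) + norm (gn n \<rho>)" by (rule norm_triangle_ineq4)
    then show ?thesis unfolding f_def using gB[OF that] gnB[OF that, of n] by simp
  qed
  have f_meas: "f n \<in> borel_measurable (lebesgue_on {s..t})" for n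
  proof -
    have gm: "g \<in> borel_measurable (lebesgue_on {s..t})"
      by (rule integrable_imp_measurable[OF gint]) (use st in auto)
    have flm: "(\<lambda>\<rho>::real. \<lfloor>(\<rho> - s) / h n\<rfloor>) \<in> measurable (lebesgue_on {s..t}) (count_space UNIV)"
    proof -
      have "(\<lambda>\<rho>::real. (\<rho> - s) / h n) \<in> borel_measurable (lebesgue_on {s..t})"
        using hpos[of n] by (intro continuous_imp_measurable_on_sets_lebesgue continuous_intros) auto
      then show ?thesis using measurable_real_floor by (rule measurable_compose)
    qed
    have gnm: "gn n \<in> borel_measurable (lebesgue_on {s..t})"
      unfolding gn_def Let_def
      by (rule measurable_compose_countable'[OF _ flm]) auto
    show ?thesis unfolding f_def using gm gnm by measurable
  qed
  have f_int: "f n integrable_on {s..t}" for n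
    by (rule measurable_bounded_by_integrable_imp_integrable[OF f_meas, of "\<lambda>_. 2 * B"])
       (use fB in \<open>auto intro: integrable_on_const\<close>)
  have f_nonneg: "f n \<rho> \<ge> 0" for n \<rho> unfolding f_def by simp
  have f_int_sub: "f n integrable_on {a..b}" if "s \<le> a" "b \<le> t" for n a b
  proof (cases "a \<le> b")
    case True show ?thesis by (rule integrable_subinterval_real[OF f_int]) (use that True in auto)
  qed auto
  have \<delta>_nonneg: "\<delta> n k \<ge> 0" if "k \<le> n" for n k
    unfolding \<delta>_def
    by (rule integral_nonneg[OF f_int_sub]) (use rin[of k n] rin[of "Suc k" n] that f_nonneg in auto)
  have partial: "integral {s..r n k} (f n) = (\<Sum>j<k. \<delta> n j)" if "k \<le> Suc n" for n k
    using that
  proof (induction k)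
    case 0 then show ?case by (simp add: r0)
  next
    case (Suc k)
    have k: "k \<le> Suc n" using Suc.prems by simp
    have "integral {s..r n k} (f n) + integral {r n k..r n (Suc k)} (f n) = integral {s..r n (Suc k)} (f n)"
      by (rule Henstock_Kurzweil_Integration.integral_combine)
         (use rin[OF k] rin[OF Suc.prems] rmono[of k "Suc k" n] f_int_sub[of s "r n (Suc k)" n] in auto)
    then show ?case using Suc.IH[OF k] by (simp add: \<delta>_def)
  qed
  have Dsum: "D n = (\<Sum>j<Suc n. \<delta> n j)" for n
    using partial[of "Suc n" n] rend unfolding D_def by simp
  have Dnonneg: "D n \<ge> 0" for n unfolding Dsum by (rule sum_nonneg) (use \<delta>_nonneg in auto)
  have step: "norm (integral {r n k..r n (Suc k)} g - h n *\<^sub>R Gt (cc n k) (y (r n k))) \<le> \<delta> n k"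
    if "k \<le> n" for n k
  proof -
    define a where "a = r n k"
    define b where "b = r n (Suc k)"
    define C where "C = Gt (cc n k) (y (r n k))"
    have ab: "s \<le> a" "a \<le> b" "b \<le> t" unfolding a_def b_def
      using rin[of k n] rin[of "Suc k" n] rmono[of k "Suc k" n] that by auto
    have ba: "b - a = h n" unfolding a_def b_def rSuc by simp
    have gi: "g integrable_on {a..b}" by (rule gint) (use ab st in auto)
    have ci: "(\<lambda>_. C) integrable_on {a..b}" by (rule integrable_on_const) auto
    have "integral {a..b} (\<lambda>\<rho>. g \<rho> - C) = integral {a..b} g - integral {a..b} (\<lambda>_. C)"
      by (rule integral_diff[OF gi ci])
    also have "integral {a..b} (\<lambda>_. C) = h n *\<^sub>R C"
      using ab ba by (simp add: integral_const_real)
    finally have eq: "integral {a..b} (\<lambda>\<rho>. g \<rho> - C) = integral {a..b} g - h n *\<^sub>R C" .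
    have fe: "f n \<rho> = norm (g \<rho> - C)" if "\<rho> \<in> {a..b} - {b}" for \<rho>
      using gn_piece[of n k \<rho>] that unfolding f_def C_def a_def b_def by auto
    have ii: "(\<lambda>\<rho>. norm (g \<rho> - C)) integrable_on {a..b}"
      by (rule integrable_spike_finite[of "{b}" _ _ "f n"]) (use fe f_int_sub[of a b n] ab in auto)
    have "norm (integral {a..b} (\<lambda>\<rho>. g \<rho> - C)) \<le> integral {a..b} (\<lambda>\<rho>. norm (g \<rho> - C))"
      by (rule integral_norm_bound_integral) (use gi ci ii in \<open>auto intro: integrable_diff\<close>)
    also have "\<dots> = \<delta> n k" unfolding \<delta>_def a_def[symmetric] b_def[symmetric]
      by (rule integral_spike[of "{b}"]) (use fe in auto)
    finally show ?thesis using eq unfolding a_def b_def C_def by simp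
  qed
  have Dlim: "D \<longlonglongrightarrow> 0"
  proof -
    have hlim: "h \<longlonglongrightarrow> 0" unfolding h_def[abs_def] by (rule tendsto_hn)
    have conv: "(\<lambda>n. f n \<rho>) \<longlonglongrightarrow> 0" if \<rho>: "\<rho> \<in> {s..t}" for \<rho>
    proof -
      define m where "m n = \<lfloor>(\<rho> - s) / h n\<rfloor>" for n
      define a where "a n = s + real_of_int (m n) * h n" for n
      have a_le: "a n \<le> \<rho>" for n
      proof -
        have "real_of_int (m n) \<le> (\<rho> - s) / h n" unfolding m_def by simp
        then show ?thesis unfolding a_def using hpos[of n] by (simp add: field_simps)
      qed
      have a_gt: "\<rho> < a n + h n" for n
      proof -
        have "(\<rho> - s) / h n < real_of_int (m n) + 1" unfolding m_def by simp
        then show ?thesis unfolding a_def using hpos[of n] by (simp add: field_simps)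
      qed
      have a_in: "a n \<in> {s..t}" for n
      proof -
        have "0 \<le> (\<rho> - s) / h n" using \<rho> hpos[of n] by auto
        then have "0 \<le> real_of_int (m n)" unfolding m_def by simp
        then show ?thesis using a_le[of n] \<rho> hpos[of n] unfolding a_def by auto
      qed
      have alim: "a \<longlonglongrightarrow> \<rho>"
      proof (rule tendsto_sandwich[of "\<lambda>n. \<rho> - h n" _ _ "\<lambda>n. \<rho>"])
        show "\<forall>\<^sub>F n in sequentially. \<rho> - h n \<le> a n" using a_gt by (auto simp: algebra_simps less_imp_le)
        show "\<forall>\<^sub>F n in sequentially. a n \<le> \<rho>" using a_le by auto
        show "(\<lambda>n. \<rho> - h n) \<longlonglongrightarrow> \<rho>" using tendsto_diff[OF tendsto_const hlim, of \<rho>] by simp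
      qed simp
      have \<rho>0: "0 \<le> \<rho>" using \<rho> st by auto
      obtain e where e: "e > 0" "\<forall>u\<in>{\<rho>..<\<rho>+e}. c u = c \<rho>" using right[OF \<rho>0] by blast
      have "\<forall>\<^sub>F n in sequentially. h n < e" using order_tendstoD(2)[OF hlim e(1)] .
      then have ev: "\<forall>\<^sub>F n in sequentially. gn n \<rho> = G (c \<rho>) (y (a n))"
      proof eventually_elim
        case (elim n)
        have "a n + h n \<in> {\<rho>..<\<rho>+e}" using a_gt[of n] a_le[of n] elim by auto
        then have "c (a n + h n) = c \<rho>" using e(2) by blast
        then show ?case unfolding gn_def m_def[symmetric] Let_def Gt_def
          using cN[OF \<rho>0] by (simp add: a_def algebra_simps)
      qed
      have "(\<lambda>n. y (a n)) \<longlonglongrightarrow> y \<rho>"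
        by (rule continuous_on_tendsto_compose[OF ycont alim \<rho>]) (use a_in in auto)
      then have "(\<lambda>n. G (c \<rho>) (y (a n))) \<longlonglongrightarrow> G (c \<rho>) (y \<rho>)"
        by (rule continuous_on_tendsto_compose[OF cont[OF cN[OF \<rho>0]]]) auto
      then have "(\<lambda>n. gn n \<rho>) \<longlonglongrightarrow> g \<rho>" unfolding g_def
        by (rule Lim_transform_eventually) (use ev in \<open>auto elim: eventually_mono\<close>)
      then have "(\<lambda>n. norm (g \<rho> - gn n \<rho>)) \<longlonglongrightarrow> norm (g \<rho> - g \<rho>)"
        by (intro tendsto_intros)
      then show ?thesis unfolding f_def by simp
    qed
    have "(\<lambda>n. integral {s..t} (f n)) \<longlonglongrightarrow> integral {s..t} (\<lambda>_. 0::real)"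
      by (rule dominated_convergence(2)[OF f_int, of "\<lambda>_. 2 * B"])
         (use fB conv in \<open>auto intro: integrable_on_const\<close>)
    then show ?thesis unfolding D_def[abs_def] by simp
  qed
  define E where "E = exp (L * (t - s))"
  have E0: "E \<ge> 0" unfolding E_def by simp
  have E1: "(1 + h n * L) ^ k \<le> E" if "k \<le> Suc n" for n k
  proof -
    have hL: "0 \<le> h n * L" using hpos[of n] L0 by simp
    have "(1 + h n * L) ^ k \<le> exp (h n * L) ^ k"
      by (rule power_mono[OF exp_ge_add_one_self]) (use hL in simp)
    also have "\<dots> = exp (real k * (h n * L))" by (simp add: exp_of_nat_mult)
    also have "\<dots> \<le> E" unfolding E_def
    proof (subst exp_le_cancel_iff)
      have "real k * h n \<le> real (Suc n) * h n" using that hpos[of n] by (intro mult_right_mono) auto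
      also have "real (Suc n) * h n = t - s" unfolding h_def by simp
      finally show "real k * (h n * L) \<le> L * (t - s)" using L0
        by (metis mult.assoc mult.commute mult_right_mono)
    qed
    finally show ?thesis .
  qed
  have psum_le: "(\<Sum>j<k. \<delta> n j) \<le> D n" if "k \<le> Suc n" for n k
    unfolding Dsum by (rule sum_mono2) (use that \<delta>_nonneg in auto)
  have psum_nonneg: "(\<Sum>j<k. \<delta> n j) \<ge> 0" if "k \<le> Suc n" for n k
    by (rule sum_nonneg) (use that \<delta>_nonneg in auto)
  have err: "norm (xs n k - y (r n k)) \<le> (1 + h n * L) ^ k * (\<Sum>j<k. \<delta> n j)"
    if ED: "E * D n < 1" and "k \<le> Suc n" for n k
    using that(2)
  proof (induction k)
    case 0 then show ?case by (simp add: xs_def euler_def r0)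
  next
    case (Suc k)
    have k: "k \<le> n" "k \<le> Suc n" using Suc.prems by auto
    define P where "P = 1 + h n * L"
    have P1: "P \<ge> 1" unfolding P_def using hpos[of n] L0 by simp
    define Sk where "Sk = (\<Sum>j<k. \<delta> n j)"
    define ek where "ek = xs n k - y (r n k)"
    have IH: "norm ek \<le> P ^ k * Sk" using Suc.IH[OF k(2)] unfolding P_def Sk_def ek_def .
    have "P ^ k * Sk \<le> E * D n"
      unfolding P_def Sk_def by (rule mult_mono[OF E1[OF k(2)] psum_le[OF k(2)] E0 psum_nonneg[OF k(2)]])
    then have "dist (xs n k) (y (r n k)) \<le> 1" using IH ED unfolding ek_def by (simp add: dist_norm)
    then have xK: "xs n k \<in> K" by (rule inK[OF rin[OF k(2)]])
    have yK: "y (r n k) \<in> K" by (rule YK[OF rin[OF k(2)]])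
    have ccN: "cc n k < N" unfolding cc_def by (rule cN) (use rin[of "Suc k" n] st Suc.prems in auto)
    have lipk: "norm (Gt (cc n k) (xs n k) - Gt (cc n k) (y (r n k))) \<le> L * norm ek"
      using lipschitz_onD[OF L[OF ccN] xK yK] ccN unfolding Gt_def ek_def by (simp add: dist_norm)
    have yS: "y (r n (Suc k)) = y (r n k) - integral {r n k..r n (Suc k)} g"
      by (rule ydiff) (use rin[of k n] rmono[of k "Suc k" n] st k in auto)
    define I where "I = integral {r n k..r n (Suc k)} g"
    define C where "C = Gt (cc n k) (y (r n k))"
    define W where "W = Gt (cc n k) (xs n k) - C"
    have eq: "xs n (Suc k) - y (r n (Suc k)) = ek - h n *\<^sub>R W + (I - h n *\<^sub>R C)"
      unfolding xsSuc yS I_def[symmetric] W_def C_def ek_def by (simp add: algebra_simps)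
    have "norm (ek - h n *\<^sub>R W + (I - h n *\<^sub>R C)) \<le> norm ek + norm (h n *\<^sub>R W) + norm (I - h n *\<^sub>R C)"
      by (rule order_trans[OF norm_triangle_ineq add_right_mono[OF norm_triangle_ineq4]])
    also have "norm (h n *\<^sub>R W) = h n * norm W" using hpos[of n] by simp
    also have "norm W \<le> L * norm ek" using lipk unfolding W_def C_def .
    also have "norm (I - h n *\<^sub>R C) \<le> \<delta> n k" unfolding I_def C_def by (rule step[OF k(1)])
    finally have "norm (xs n (Suc k) - y (r n (Suc k))) \<le> P * norm ek + \<delta> n k"
      unfolding eq P_def using hpos[of n] by (simp add: algebra_simps mult_left_mono)
    also have "\<dots> \<le> P * (P ^ k * Sk) + \<delta> n k"
      using IH P1 by (intro add_right_mono mult_left_mono) auto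
    also have "\<dots> \<le> P ^ Suc k * Sk + P ^ Suc k * \<delta> n k"
    proof -
      have "1 \<le> P ^ Suc k" using P1 by (rule one_le_power)
      from mult_right_mono[OF this \<delta>_nonneg[OF k(1)]]
      have "\<delta> n k \<le> P ^ Suc k * \<delta> n k" by simp
      then show ?thesis by simp
    qed
    also have "\<dots> = P ^ Suc k * (\<Sum>j<Suc k. \<delta> n j)" unfolding Sk_def by (simp add: algebra_simps)
    finally show ?case unfolding P_def .
  qed
  have EDlim: "(\<lambda>n. E * D n) \<longlonglongrightarrow> 0" using tendsto_mult_right_zero[OF Dlim] .
  have evED: "\<forall>\<^sub>F n in sequentially. E * D n < 1" using order_tendstoD(2)[OF EDlim] by simp
  have "\<forall>\<^sub>F n in sequentially. norm (xs n (Suc n) - y t) \<le> E * D n"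
    using evED
  proof eventually_elim
    case (elim n)
    have "norm (xs n (Suc n) - y t) \<le> (1 + h n * L) ^ Suc n * (\<Sum>j<Suc n. \<delta> n j)"
      using err[OF elim, of "Suc n"] rend by simp
    also have "\<dots> \<le> E * D n" unfolding Dsum[symmetric]
      by (rule mult_right_mono[OF E1 Dnonneg]) simp
    finally show ?case .
  qed
  then have "(\<lambda>n. xs n (Suc n) - y t) \<longlonglongrightarrow> 0" by (rule Lim_null_comparison[OF _ EDlim])
  then have "(\<lambda>n. xs n (Suc n)) \<longlonglongrightarrow> y t" by (rule LIM_zero_cancel)
  then show ?thesis unfolding goal_eq .
qed

lemma map_meas:
  assumes "\<And>\<tau>. \<tau> \<in> set ts \<Longrightarrow> i \<tau> \<in> measurable F (count_space UNIV)"
  shows "(\<lambda>\<omega>. map (\<lambda>\<tau>. (i \<tau> \<omega>::nat)) ts) \<in> measurable F (count_space UNIV)"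
  using assms
proof (induction ts)
  case Nil then show ?case by simp
next
  case (Cons \<tau> ts)
  have rest: "(\<lambda>\<omega>. map (\<lambda>\<tau>. i \<tau> \<omega>) ts) \<in> measurable F (count_space UNIV)"
    using Cons by simp
  have "(\<lambda>\<omega>. (\<lambda>m \<omega>. m # map (\<lambda>\<tau>. i \<tau> \<omega>) ts) (i \<tau> \<omega>) \<omega>) \<in> measurable F (count_space UNIV)"
  proof (rule measurable_compose_countable'[where I=UNIV and f="\<lambda>m \<omega>. m # map (\<lambda>\<tau>. i \<tau> \<omega>) ts" and g="i \<tau>"])
    fix m :: nat assume "m \<in> (UNIV::nat set)"
    show "(\<lambda>\<omega>. m # map (\<lambda>\<tau>. i \<tau> \<omega>) ts) \<in> measurable F (count_space UNIV)"
      using measurable_compose[OF rest measurable_count_space[of "\<lambda>l. m # l"]] by simp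
  qed (use Cons.prems in auto)
  then show ?case by simp
qed

lemma map_fun_meas:
  assumes "\<And>\<tau>. \<tau> \<in> set ts \<Longrightarrow> i \<tau> \<in> measurable F (count_space UNIV)"
  shows "(\<lambda>\<omega>. h (map (\<lambda>\<tau>. (i \<tau> \<omega>::nat)) ts)) \<in> measurable F (count_space UNIV)"
  using measurable_compose[OF map_meas[of ts i F, OF assms] measurable_count_space[of h]] by simp

lemma map_fun_borel:
  assumes "\<And>\<tau>. \<tau> \<in> set ts \<Longrightarrow> i \<tau> \<in> measurable F (count_space UNIV)"
  shows "(\<lambda>\<omega>. h (map (\<lambda>\<tau>. (i \<tau> \<omega>::nat)) ts)) \<in> borel_measurable F"
  using measurable_compose[OF map_meas[of ts i F, OF assms] borel_measurable_count_space[of h]] by simp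

lemma euler_cont:
  fixes F :: "nat \<Rightarrow> 'a::real_normed_vector \<Rightarrow> 'a"
  assumes "\<And>l. continuous_on UNIV (F l)"
  shows "continuous_on UNIV (\<lambda>x. euler F h x ls)"
proof (induction ls)
  case Nil then show ?case by (simp add: euler_def continuous_on_id)
next
  case (Cons l ls)
  have e: "(\<lambda>x. euler F h x (l # ls)) = (\<lambda>x. euler F h x ls) \<circ> (\<lambda>x. x - h *\<^sub>R F l x)"
    by (simp add: euler_def fun_eq_iff)
  have "continuous_on UNIV (\<lambda>x. x - h *\<^sub>R F l x)"
    using assms[of l] by (auto intro!: continuous_intros)
  then show ?case unfolding e
    by (rule continuous_on_compose) (use Cons continuous_on_subset in blast)
qed

lemma theta_measurable:
  fixes G :: "nat \<Rightarrow> 'a::euclidean_space \<Rightarrow> 'a" and i :: "real \<Rightarrow> 'w \<Rightarrow> nat" and \<theta> :: "real \<Rightarrow> 'w \<Rightarrow> 'a"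
  assumes cont: "\<And>n. n < N \<Longrightarrow> continuous_on UNIV (G n)"
    and lip: "\<And>n. n < N \<Longrightarrow> loc_lipschitz (G n)"
    and cN: "\<And>\<omega> r. \<omega> \<in> space F \<Longrightarrow> r \<ge> 0 \<Longrightarrow> i r \<omega> < N"
    and right: "\<And>\<omega> r. \<omega> \<in> space F \<Longrightarrow> r \<ge> 0 \<Longrightarrow> \<exists>e>0. \<forall>u\<in>{r..<r+e}. i u \<omega> = i r \<omega>"
    and ode: "\<And>\<omega> t. \<omega> \<in> space F \<Longrightarrow> t \<ge> 0 \<Longrightarrow> ((\<lambda>r. G (i r \<omega>) (\<theta> r \<omega>)) has_integral (y0 - \<theta> t \<omega>)) {0..t}"
    and mi: "\<And>\<tau>. \<tau> \<in> {s<..t} \<Longrightarrow> i \<tau> \<in> measurable F (count_space UNIV)"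
    and m\<theta>: "\<theta> s \<in> borel_measurable F"
    and st: "0 \<le> s" "s \<le> t"
  shows "\<theta> t \<in> borel_measurable F"
proof (cases "s = t")
  case True then show ?thesis using m\<theta> by simp
next
  case False
  then have st': "s < t" using st by simp
  define Gt where "Gt l x = (if l < N then G l x else 0)" for l x
  have Gtc: "continuous_on UNIV (Gt l)" for l
  proof (cases "l < N")
    case True
    have "Gt l = G l" unfolding Gt_def using True by (simp add: fun_eq_iff)
    then show ?thesis using cont[OF True] by simp
  next
    case False
    have "Gt l = (\<lambda>_. 0)" unfolding Gt_def using False by (simp add: fun_eq_iff)
    then show ?thesis by (simp add: continuous_on_const)
  qed
  define ts where "ts n = map (\<lambda>k. s + real (Suc k) * ((t-s)/real (Suc n))) [0..<Suc n]" for n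
  have ts_in: "\<tau> \<in> {s<..t}" if "\<tau> \<in> set (ts n)" for \<tau> n
  proof -
    have "\<tau> \<in> (\<lambda>k. s + real (Suc k) * ((t-s)/real (Suc n))) ` {0..<Suc n}"
      using that unfolding ts_def set_map set_upt .
    then obtain k where k': "\<tau> = s + real (Suc k) * ((t-s)/real (Suc n))" "k \<in> {0..<Suc n}"
      by (rule imageE)
    then have k: "k < Suc n" "\<tau> = s + real (Suc k) * ((t-s)/real (Suc n))" by auto
    have "real (Suc k) * ((t-s)/real (Suc n)) \<le> real (Suc n) * ((t-s)/real (Suc n))"
      using k st' by (intro mult_right_mono) auto
    also have "\<dots> = t - s" by simp
    finally show ?thesis using k st' by auto
  qed
  define f where "f n \<omega> = euler Gt ((t-s)/real (Suc n)) (\<theta> s \<omega>) (map (\<lambda>\<tau>. i \<tau> \<omega>) (ts n))" for n \<omega>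
  have fm: "f n \<in> borel_measurable F" for n
  proof -
    have "(\<lambda>\<omega>. (\<lambda>vs \<omega>. euler Gt ((t-s)/real (Suc n)) (\<theta> s \<omega>) vs) (map (\<lambda>\<tau>. i \<tau> \<omega>) (ts n)) \<omega>) \<in> borel_measurable F"
    proof (rule measurable_compose_countable'[where I=UNIV and f="\<lambda>vs \<omega>. euler Gt ((t-s)/real (Suc n)) (\<theta> s \<omega>) vs" and g="\<lambda>\<omega>. map (\<lambda>\<tau>. i \<tau> \<omega>) (ts n)"])
      fix vs :: "nat list" assume "vs \<in> (UNIV::nat list set)"
      have em: "(\<lambda>x. euler Gt ((t-s)/real (Suc n)) x vs) \<in> borel_measurable borel"
        by (rule borel_measurable_continuous_onI[OF euler_cont[OF Gtc]])
      then show "(\<lambda>\<omega>. euler Gt ((t-s)/real (Suc n)) (\<theta> s \<omega>) vs) \<in> borel_measurable F"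
        using measurable_compose[OF m\<theta> em] by (simp add: comp_def)
    next
      show "(\<lambda>\<omega>. map (\<lambda>\<tau>. i \<tau> \<omega>) (ts n)) \<in> measurable F (count_space UNIV)"
        by (rule map_meas) (rule mi, erule ts_in)
    qed simp
    then show ?thesis unfolding f_def by simp
  qed
  show ?thesis
  proof (rule borel_measurable_LIMSEQ_metric[OF fm])
    fix \<omega> assume \<omega>: "\<omega> \<in> space F"
    have "(\<lambda>n. euler (\<lambda>l x. if l < N then G l x else 0) ((t-s)/real (Suc n)) (\<theta> s \<omega>)
            (map (\<lambda>k. i (s + real (Suc k) * ((t-s)/real (Suc n)))  \<omega>) [0..<Suc n])) \<longlonglongrightarrow> \<theta> t \<omega>"
      by (rule euler_conv[where c="\<lambda>r. i r \<omega>" and y="\<lambda>r. \<theta> r \<omega>", OF cont lip cN[OF \<omega>] right[OF \<omega>] ode[OF \<omega>] st(1) st'])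
    then show "(\<lambda>n. f n \<omega>) \<longlonglongrightarrow> \<theta> t \<omega>"
      unfolding f_def ts_def Gt_def[abs_def] by (simp add: comp_def)
  qed
qed

lemma nf_gens_pow: "(\<Union>u\<in>{0..s}. (\<lambda>A. Z u -` A \<inter> space M) ` sets S) \<subseteq> Pow (space M)"
  by auto

lemma nf_space [simp]: "space (natural_filtration M S Z s) = space M"
  unfolding natural_filtration_def by (simp add: space_measure_of_conv)

lemma nf_sets: "sets (natural_filtration M S Z s) =
    sigma_sets (space M) (\<Union>u\<in>{0..s}. (\<lambda>A. Z u -` A \<inter> space M) ` sets S)"
  unfolding natural_filtration_def by (rule sets_measure_of[OF nf_gens_pow])

lemma nf_meas:
  assumes "u \<in> {0..s}" "Z u \<in> space M \<rightarrow> space S"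
  shows "Z u \<in> measurable (natural_filtration M S Z s) S"
proof (rule measurableI)
  show "Z u x \<in> space S" if "x \<in> space (natural_filtration M S Z s)" for x
    using assms(2) that by auto
  fix A assume "A \<in> sets S"
  then have "Z u -` A \<inter> space M \<in> (\<Union>u\<in>{0..s}. (\<lambda>A. Z u -` A \<inter> space M) ` sets S)"
    using assms(1) by blast
  then show "Z u -` A \<inter> space (natural_filtration M S Z s) \<in> sets (natural_filtration M S Z s)"
    unfolding nf_sets by auto
qed

lemma nf_minimal:
  assumes "space F = space M" "\<And>u. u \<in> {0..s} \<Longrightarrow> Z u \<in> measurable F S"
  shows "sets (natural_filtration M S Z s) \<subseteq> sets F"
  unfolding nf_sets
proof (rule sets.sigma_sets_subset'[of _ F, unfolded assms(1)])
  show "(\<Union>u\<in>{0..s}. (\<lambda>A. Z u -` A \<inter> space M) ` sets S) \<subseteq> sets F"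
    using measurable_sets[OF assms(2)] assms(1) by auto
  show "space M \<in> sets F" using sets.top[of F] assms(1) by simp
qed

lemma nf_subalg:
  assumes "\<And>u. u \<in> {0..s} \<Longrightarrow> Z u \<in> measurable M S"
  shows "subalgebra M (natural_filtration M S Z s)"
  unfolding subalgebra_def using nf_minimal[of M M s Z S] assms by auto

lemma nf_mono:
  assumes "s \<le> s'"
  shows "sets (natural_filtration M S Z s) \<subseteq> sets (natural_filtration M S Z s')"
  unfolding nf_sets
proof (rule sigma_sets_mono')
  show "(\<Union>u\<in>{0..s}. (\<lambda>A. Z u -` A \<inter> space M) ` sets S)
      \<subseteq> (\<Union>u\<in>{0..s'}. (\<lambda>A. Z u -` A \<inter> space M) ` sets S)"
  proof (rule UN_mono)
    show "{0..s} \<subseteq> {0..s'}" using assms by auto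
  qed auto
qed

lemma (in prob_space) subalg_sigma_finite:
  assumes "subalgebra M F"
  shows "sigma_finite_subalgebra M F"
proof -
  interpret finite_measure_subalgebra M F
    by unfold_locales (rule assms)
  show ?thesis by (rule sigma_finite_subalgebra_axioms)
qed

definition rmap :: "real set \<Rightarrow> nat list \<Rightarrow> real \<Rightarrow> nat" where
  "rmap T vs = (\<lambda>\<tau>. if \<tau> \<in> T then the (map_of (zip (sorted_list_of_set T) vs) \<tau>) else undefined)"

lemma rmap_restrict: "finite T \<Longrightarrow> rmap T (map f (sorted_list_of_set T)) = restrict f T"
  by (auto simp: rmap_def restrict_def fun_eq_iff map_of_zip_map)

fun Kf :: "nat \<Rightarrow> (real \<Rightarrow> real \<Rightarrow> nat \<Rightarrow> nat \<Rightarrow> real) \<Rightarrow> real \<Rightarrow> real list \<Rightarrow> (nat list \<Rightarrow> real) \<Rightarrow> nat \<Rightarrow> real" where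
  "Kf N p s [] h l = h []"
| "Kf N p s (t # ts) h l = (\<Sum>m<N. p s t l m * Kf N p t ts (\<lambda>vs. h (m # vs)) m)"

lemma integrable_mult_bdd:
  fixes X Y :: "'w \<Rightarrow> real"
  assumes "integrable M X" "Y \<in> borel_measurable M" "\<And>\<omega>. \<omega> \<in> space M \<Longrightarrow> \<bar>Y \<omega>\<bar> \<le> C"
  shows "integrable M (\<lambda>\<omega>. X \<omega> * Y \<omega>)"
proof (rule Bochner_Integration.integrable_bound[OF integrable_mult_right[OF integrable_abs[OF assms(1)], of "\<bar>C\<bar>"]])
  show "(\<lambda>\<omega>. X \<omega> * Y \<omega>) \<in> borel_measurable M"
    using assms(1,2) by measurable
  show "AE x in M. norm (X x * Y x) \<le> norm (\<bar>C\<bar> * \<bar>X x\<bar>)"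
  proof (rule AE_I2)
    fix x assume "x \<in> space M"
    then have "\<bar>Y x\<bar> \<le> \<bar>C\<bar>" using assms(3) by fastforce
    then show "norm (X x * Y x) \<le> norm (\<bar>C\<bar> * \<bar>X x\<bar>)"
      by (simp add: abs_mult mult.commute[of "\<bar>C\<bar>"] mult_left_mono)
  qed
qed

lemma sum_indicator_sel:
  "(\<Sum>m<N. indicator {m} (a::nat) * (f m::real)) = (if a < N then f a else 0)"
  by (simp add: indicator_def if_distrib sum.If_cases lessThan_def)

locale sgp = prob_space M
  for M :: "'w measure" +
  fixes N :: nat and p :: "real \<Rightarrow> real \<Rightarrow> nat \<Rightarrow> nat \<Rightarrow> real" and i :: "real \<Rightarrow> 'w \<Rightarrow> nat"
    and \<theta> :: "real \<Rightarrow> 'w \<Rightarrow> 'a::euclidean_space" and G :: "nat \<Rightarrow> 'a \<Rightarrow> 'a" and \<theta>0 :: 'a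
  assumes i_meas: "\<And>t. t \<ge> 0 \<Longrightarrow> i t \<in> measurable M (count_space UNIV)"
    and iN: "\<And>\<omega> t. \<omega> \<in> space M \<Longrightarrow> t \<ge> 0 \<Longrightarrow> i t \<omega> < N"
    and right: "\<And>\<omega> t. \<omega> \<in> space M \<Longrightarrow> t \<ge> 0 \<Longrightarrow> \<exists>e>0. \<forall>u\<in>{t..<t+e}. i u \<omega> = i t \<omega>"
    and pcond: "\<And>s t l. 0 \<le> s \<Longrightarrow> s \<le> t \<Longrightarrow> l < N \<Longrightarrow>
       AE \<omega> in M. real_cond_exp M (natural_filtration M (count_space UNIV) i s)
                   (\<lambda>\<omega>. indicator {l} (i t \<omega>)) \<omega> = p s t (i s \<omega>) l"
    and cont: "\<And>n. n < N \<Longrightarrow> continuous_on UNIV (G n)"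
    and lip: "\<And>n. n < N \<Longrightarrow> loc_lipschitz (G n)"
    and ode: "\<And>\<omega> t. \<omega> \<in> space M \<Longrightarrow> t \<ge> 0 \<Longrightarrow>
         ((\<lambda>s. G (i s \<omega>) (\<theta> s \<omega>)) has_integral (\<theta>0 - \<theta> t \<omega>)) {0..t}"
begin

abbreviation "Fi s \<equiv> natural_filtration M (count_space UNIV) i s"
abbreviation "SS \<equiv> (borel \<Otimes>\<^sub>M count_space UNIV) :: ('a \<times> nat) measure"
abbreviation "Z \<equiv> (\<lambda>t \<omega>. (\<theta> t \<omega>, i t \<omega>))"
abbreviation "FZ s \<equiv> natural_filtration M SS Z s"
abbreviation "Gs s \<equiv> vimage_algebra (space M) (Z s) SS"

definition Cyl :: "real \<Rightarrow> 'w set set" where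
  "Cyl s = {{\<omega>\<in>space M. \<theta> s \<omega> \<in> C \<and> restrict (\<lambda>\<tau>. i \<tau> \<omega>) T \<in> R} | C T R.
     C \<in> sets borel \<and> finite T \<and> T \<subseteq> {s..}}"

definition H :: "real \<Rightarrow> 'w measure" where
  "H s = sigma (space M) (Cyl s)"

lemma Cyl_pow: "Cyl s \<subseteq> Pow (space M)"
  unfolding Cyl_def by auto

lemma H_space [simp]: "space (H s) = space M"
  unfolding H_def by (simp add: space_measure_of_conv)

lemma H_sets: "sets (H s) = sigma_sets (space M) (Cyl s)"
  unfolding H_def by (rule sets_measure_of[OF Cyl_pow])

lemma Fi_sub: "0 \<le> s \<Longrightarrow> subalgebra M (Fi s)"
  by (rule nf_subalg) (auto intro: i_meas)

lemma i_Fi: "0 \<le> u \<Longrightarrow> u \<le> s \<Longrightarrow> i u \<in> measurable (Fi s) (count_space UNIV)"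
  by (rule nf_meas) auto

lemma Fi_mono_sub: "0 \<le> u \<Longrightarrow> u \<le> s \<Longrightarrow> subalgebra (Fi s) (Fi u)"
  unfolding subalgebra_def using nf_mono[of u s] by simp

lemma theta0: assumes "\<omega> \<in> space M" shows "\<theta> 0 \<omega> = \<theta>0"
proof -
  have a: "((\<lambda>s. G (i s \<omega>) (\<theta> s \<omega>)) has_integral (\<theta>0 - \<theta> 0 \<omega>)) {0..0}"
    by (rule ode[OF assms order_refl])
  have b: "((\<lambda>s. G (i s \<omega>) (\<theta> s \<omega>)) has_integral 0) {0..(0::real)}"
    by (rule has_integral_null_real) simp
  have "\<theta>0 - \<theta> 0 \<omega> = 0" by (rule has_integral_unique[OF a b])
  then show ?thesis by simp
qed

lemma theta_Fi: assumes t0: "0 \<le> t" shows "\<theta> t \<in> borel_measurable (Fi t)"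
proof (rule theta_measurable[where s=0 and i=i and G=G and N=N, OF cont lip])
  show "i r \<omega> < N" if "\<omega> \<in> space (Fi t)" "0 \<le> r" for \<omega> r using iN[of \<omega> r] that by simp
  show "\<exists>e>0. \<forall>u\<in>{r..<r + e}. i u \<omega> = i r \<omega>" if "\<omega> \<in> space (Fi t)" "0 \<le> r" for \<omega> r
    using right[of \<omega> r] that by simp
  show "((\<lambda>r. G (i r \<omega>) (\<theta> r \<omega>)) has_integral \<theta>0 - \<theta> t' \<omega>) {0..t'}"
    if "\<omega> \<in> space (Fi t)" "0 \<le> t'" for \<omega> t' using ode[of \<omega> t'] that by simp
  show "i \<tau> \<in> measurable (Fi t) (count_space UNIV)" if "\<tau> \<in> {0<..t}" for \<tau>
    using that by (intro i_Fi) auto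
  have eq: "\<And>\<omega>. \<omega> \<in> space (Fi t) \<Longrightarrow> \<theta> 0 \<omega> = \<theta>0" using theta0 by simp
  show "\<theta> 0 \<in> borel_measurable (Fi t)" by (subst measurable_cong[OF eq]) simp_all
  show "(0::real) \<le> 0" by simp
  show "0 \<le> t" by (rule t0)
qed

end

context sgp
begin

lemma theta_M: "0 \<le> t \<Longrightarrow> \<theta> t \<in> borel_measurable M"
  by (rule measurable_from_subalg[OF Fi_sub theta_Fi])

lemma theta_Fi_mono: "0 \<le> u \<Longrightarrow> u \<le> s \<Longrightarrow> \<theta> u \<in> borel_measurable (Fi s)"
  by (rule measurable_from_subalg[OF Fi_mono_sub theta_Fi])

lemma Z_Fi: "0 \<le> u \<Longrightarrow> u \<le> s \<Longrightarrow> Z u \<in> measurable (Fi s) SS"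
  by (rule measurable_Pair[OF theta_Fi_mono i_Fi])

lemma Z_M: "0 \<le> t \<Longrightarrow> Z t \<in> measurable M SS"
  by (rule measurable_Pair[OF theta_M i_meas])

lemma FZ_Fi: "0 \<le> s \<Longrightarrow> sets (FZ s) \<subseteq> sets (Fi s)"
  by (rule nf_minimal) (auto intro: Z_Fi)

lemma FZ_sub: "0 \<le> s \<Longrightarrow> subalgebra M (FZ s)"
  by (rule nf_subalg) (auto intro: Z_M)

lemma Fi_FZ_sub: "0 \<le> s \<Longrightarrow> subalgebra (Fi s) (FZ s)"
  unfolding subalgebra_def using FZ_Fi by simp

lemma Gs_space [simp]: "space (Gs s) = space M" by simp

lemma Gs_sets_eq: "sets (Gs s) = {Z s -` A \<inter> space M | A. A \<in> sets SS}"
  by (rule sets_vimage_algebra2) (simp add: space_pair_measure)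

lemma Gs_FZ: "0 \<le> s \<Longrightarrow> sets (Gs s) \<subseteq> sets (FZ s)"
proof
  fix B assume "B \<in> sets (Gs s)"
  then obtain A where A: "A \<in> sets SS" "B = Z s -` A \<inter> space M" unfolding Gs_sets_eq by blast
  assume "0 \<le> s"
  have "Z s \<in> measurable (FZ s) SS" by (rule nf_meas) (use \<open>0 \<le> s\<close> in \<open>auto simp: space_pair_measure\<close>)
  from measurable_sets[OF this A(1)] show "B \<in> sets (FZ s)" using A(2) by simp
qed

lemma FZ_Gs_sub: "0 \<le> s \<Longrightarrow> subalgebra (FZ s) (Gs s)"
  unfolding subalgebra_def using Gs_FZ by simp

lemma Fi_Gs_sub: "0 \<le> s \<Longrightarrow> subalgebra (Fi s) (Gs s)"
  unfolding subalgebra_def using Gs_FZ FZ_Fi by fastforce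

lemma Gs_sub: "0 \<le> s \<Longrightarrow> subalgebra M (Gs s)"
  using Fi_Gs_sub Fi_sub unfolding subalgebra_def by fastforce

lemma Z_Gs: "Z s \<in> measurable (Gs s) SS"
  by (rule measurable_vimage_algebra1) (simp add: space_pair_measure)

lemma Cyl_M: "0 \<le> s \<Longrightarrow> Cyl s \<subseteq> sets M"
proof
  fix B assume s0: "0 \<le> s" and "B \<in> Cyl s"
  then obtain C T R where B: "B = {\<omega>\<in>space M. \<theta> s \<omega> \<in> C \<and> restrict (\<lambda>\<tau>. i \<tau> \<omega>) T \<in> R}"
    and C: "C \<in> sets borel" and T: "finite T" "T \<subseteq> {s..}"
    unfolding Cyl_def by blast
  define ts where "ts = sorted_list_of_set T"
  have eqr: "restrict (\<lambda>\<tau>. i \<tau> \<omega>) T = rmap T (map (\<lambda>\<tau>. i \<tau> \<omega>) ts)" for \<omega>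
    unfolding ts_def using rmap_restrict[OF T(1), of "\<lambda>\<tau>. i \<tau> \<omega>"] by simp
  have m1: "(\<lambda>\<omega>. rmap T (map (\<lambda>\<tau>. i \<tau> \<omega>) ts)) \<in> measurable M (count_space UNIV)"
    by (rule map_fun_meas) (use T s0 in \<open>auto simp: ts_def intro!: i_meas\<close>)
  have "B = (\<theta> s -` C \<inter> space M) \<inter> ((\<lambda>\<omega>. rmap T (map (\<lambda>\<tau>. i \<tau> \<omega>) ts)) -` R \<inter> space M)"
    unfolding B eqr by auto
  moreover have "\<theta> s -` C \<inter> space M \<in> sets M" using measurable_sets[OF theta_M[OF s0] C] .
  moreover have "(\<lambda>\<omega>. rmap T (map (\<lambda>\<tau>. i \<tau> \<omega>) ts)) -` R \<inter> space M \<in> sets M"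
    using measurable_sets[OF m1, of R] by simp
  ultimately show "B \<in> sets M" by (simp only: sets.Int)
qed

lemma cylI: "C \<in> sets borel \<Longrightarrow> finite T \<Longrightarrow> T \<subseteq> {s..} \<Longrightarrow>
   {\<omega>\<in>space M. \<theta> s \<omega> \<in> C \<and> restrict (\<lambda>\<tau>. i \<tau> \<omega>) T \<in> R} \<in> Cyl s"
  unfolding Cyl_def by blast

lemma H_sub: "0 \<le> s \<Longrightarrow> subalgebra M (H s)"
  unfolding subalgebra_def H_sets using sets.sigma_sets_subset[OF Cyl_M] by auto

lemma theta_H: "\<theta> s \<in> borel_measurable (H s)"
proof (rule measurableI)
  fix C :: "'a set" assume C: "C \<in> sets borel"
  have "\<theta> s -` C \<inter> space (H s) = {\<omega>\<in>space M. \<theta> s \<omega> \<in> C \<and> restrict (\<lambda>\<tau>. i \<tau> \<omega>) {} \<in> UNIV}"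
    by auto
  also have "\<dots> \<in> Cyl s" by (rule cylI[OF C]) auto
  finally show "\<theta> s -` C \<inter> space (H s) \<in> sets (H s)" unfolding H_sets by auto
qed simp

lemma i_H: "s \<le> \<tau> \<Longrightarrow> i \<tau> \<in> measurable (H s) (count_space UNIV)"
proof (rule measurableI)
  fix A :: "nat set" assume "s \<le> \<tau>"
  have "i \<tau> -` A \<inter> space (H s) = {\<omega>\<in>space M. \<theta> s \<omega> \<in> UNIV \<and> restrict (\<lambda>\<tau>. i \<tau> \<omega>) {\<tau>} \<in> {f. f \<tau> \<in> A}}"
    by auto
  also have "\<dots> \<in> Cyl s" by (rule cylI) (use \<open>s \<le> \<tau>\<close> in auto)
  finally show "i \<tau> -` A \<inter> space (H s) \<in> sets (H s)" unfolding H_sets by auto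
qed simp

lemma theta_H_t: assumes "0 \<le> s" "s \<le> t" shows "\<theta> t \<in> borel_measurable (H s)"
proof (rule theta_measurable[where s=s and i=i and G=G and N=N, OF cont lip])
  show "i r \<omega> < N" if "\<omega> \<in> space (H s)" "0 \<le> r" for \<omega> r using iN[of \<omega> r] that by simp
  show "\<exists>e>0. \<forall>u\<in>{r..<r + e}. i u \<omega> = i r \<omega>" if "\<omega> \<in> space (H s)" "0 \<le> r" for \<omega> r
    using right[of \<omega> r] that by simp
  show "((\<lambda>r. G (i r \<omega>) (\<theta> r \<omega>)) has_integral \<theta>0 - \<theta> t' \<omega>) {0..t'}"
    if "\<omega> \<in> space (H s)" "0 \<le> t'" for \<omega> t' using ode[of \<omega> t'] that by simp
  show "i \<tau> \<in> measurable (H s) (count_space UNIV)" if "\<tau> \<in> {s<..t}" for \<tau>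
    using that by (intro i_H) auto
  show "\<theta> s \<in> borel_measurable (H s)" by (rule theta_H)
  show "0 \<le> s" "s \<le> t" by (rule assms)+
qed

lemma Z_H: "0 \<le> s \<Longrightarrow> s \<le> t \<Longrightarrow> Z t \<in> measurable (H s) SS"
  by (rule measurable_Pair[OF theta_H_t i_H])

lemma Gs_H: "0 \<le> s \<Longrightarrow> sets (Gs s) \<subseteq> sets (H s)"
proof
  fix B assume "0 \<le> s" "B \<in> sets (Gs s)"
  then obtain A where A: "A \<in> sets SS" "B = Z s -` A \<inter> space M" unfolding Gs_sets_eq by blast
  from measurable_sets[OF Z_H[OF \<open>0 \<le> s\<close> order_refl] A(1)] show "B \<in> sets (H s)" using A(2) by simp
qed

lemma H_Gs_sub: "0 \<le> s \<Longrightarrow> subalgebra (H s) (Gs s)"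
  unfolding subalgebra_def using Gs_H by simp

end

context sgp
begin

lemma fin_fun_meas: assumes "0 \<le> u" shows "(\<lambda>\<omega>. (\<phi> (i u \<omega>)::real)) \<in> borel_measurable M"
  using measurable_compose[OF i_meas[OF assms] borel_measurable_count_space[of \<phi>]] by (simp add: comp_def)

lemma fin_fun_bdd: "\<omega> \<in> space M \<Longrightarrow> 0 \<le> u \<Longrightarrow> \<bar>(\<phi> (i u \<omega>)::real)\<bar> \<le> (\<Sum>l<N. \<bar>\<phi> l\<bar>)"
  using iN[of \<omega> u] by (intro member_le_sum[where f="\<lambda>l. \<bar>\<phi> l\<bar>"]) auto

lemma cyl_exp:
  assumes "sorted ts" "\<forall>\<tau>\<in>set ts. s \<le> \<tau>" "0 \<le> s" "integrable M X" "X \<in> borel_measurable (Fi s)"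
    "\<And>vs. \<bar>h vs\<bar> \<le> 1"
  shows "(\<integral>\<omega>. X \<omega> * h (map (\<lambda>\<tau>. i \<tau> \<omega>) ts) \<partial>M) = (\<integral>\<omega>. X \<omega> * Kf N p s ts h (i s \<omega>) \<partial>M)"
  using assms
proof (induction ts arbitrary: s X h)
  case Nil
  then show ?case by simp
next
  case (Cons t ts)
  have st: "s \<le> t" and sts: "sorted ts" "\<forall>\<tau>\<in>set ts. t \<le> \<tau>" using Cons.prems(1,2) by auto
  have s0: "0 \<le> s" by (rule Cons.prems(3))
  have t0: "0 \<le> t" using s0 st by simp
  have XM: "X \<in> borel_measurable M" by (rule measurable_from_subalg[OF Fi_sub[OF s0] Cons.prems(5)])
  have Xint: "integrable M X" by (rule Cons.prems(4))
  define hm where "hm m vs = h (m # vs)" for m vs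
  define Xm where "Xm m \<omega> = X \<omega> * indicator {m} (i t \<omega>)" for m \<omega>
  define c where "c m = Kf N p t ts (hm m) m" for m
  define rest where "rest \<omega> = map (\<lambda>\<tau>. i \<tau> \<omega>) ts" for \<omega>
  have ind_Fi: "(\<lambda>\<omega>. indicator {m} (i t \<omega>) :: real) \<in> borel_measurable (Fi t)" for m
    using measurable_compose[OF i_Fi[OF t0 order_refl] borel_measurable_count_space[of "\<lambda>l. indicator {m} l :: real"]]
    by (simp add: comp_def)
  have ind_M: "(\<lambda>\<omega>. indicator {m} (i t \<omega>) :: real) \<in> borel_measurable M" for m
    by (rule fin_fun_meas[OF t0])
  have X_Ft: "X \<in> borel_measurable (Fi t)"
    by (rule measurable_from_subalg[OF Fi_mono_sub[OF s0 st] Cons.prems(5)])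
  have Xm_Fi: "Xm m \<in> borel_measurable (Fi t)" for m
    unfolding Xm_def using X_Ft ind_Fi[of m] by (rule borel_measurable_times)
  have Xm_int: "integrable M (Xm m)" for m
    unfolding Xm_def by (rule integrable_mult_bdd[OF Xint ind_M, where C=1]) (simp add: indicator_def)
  have hrest_M: "(\<lambda>\<omega>. hm m (rest \<omega>)) \<in> borel_measurable M" for m
    unfolding rest_def by (rule map_fun_borel) (use sts t0 in \<open>auto intro!: i_meas\<close>)
  have IH: "(\<integral>\<omega>. Xm m \<omega> * hm m (rest \<omega>) \<partial>M) = (\<integral>\<omega>. Xm m \<omega> * Kf N p t ts (hm m) (i t \<omega>) \<partial>M)" for m
    unfolding rest_def by (rule Cons.IH[OF sts t0 Xm_int Xm_Fi]) (simp add: hm_def Cons.prems(6))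
  have "(\<integral>\<omega>. X \<omega> * h (map (\<lambda>\<tau>. i \<tau> \<omega>) (t # ts)) \<partial>M) = (\<integral>\<omega>. (\<Sum>m<N. Xm m \<omega> * hm m (rest \<omega>)) \<partial>M)"
  proof (rule Bochner_Integration.integral_cong[OF refl])
    fix \<omega> assume "\<omega> \<in> space M"
    then have itN: "i t \<omega> < N" by (rule iN[OF _ t0])
    have "(\<Sum>m<N. Xm m \<omega> * hm m (rest \<omega>)) = (\<Sum>m<N. indicator {m} (i t \<omega>) * (X \<omega> * hm m (rest \<omega>)))"
      unfolding Xm_def by (simp add: ac_simps)
    also have "\<dots> = X \<omega> * hm (i t \<omega>) (rest \<omega>)" using itN by (simp add: sum_indicator_sel)
    finally show "X \<omega> * h (map (\<lambda>\<tau>. i \<tau> \<omega>) (t # ts)) = (\<Sum>m<N. Xm m \<omega> * hm m (rest \<omega>))"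
      by (simp add: hm_def rest_def)
  qed
  also have "\<dots> = (\<Sum>m<N. \<integral>\<omega>. Xm m \<omega> * hm m (rest \<omega>) \<partial>M)"
  proof (rule Bochner_Integration.integral_sum)
    fix m
    show "integrable M (\<lambda>\<omega>. Xm m \<omega> * hm m (rest \<omega>))"
      by (rule integrable_mult_bdd[OF Xm_int hrest_M, where C=1]) (simp add: hm_def Cons.prems(6))
  qed
  also have "\<dots> = (\<Sum>m<N. \<integral>\<omega>. Xm m \<omega> * Kf N p t ts (hm m) (i t \<omega>) \<partial>M)"
    by (rule sum.cong[OF refl]) (rule IH)
  also have "\<dots> = (\<Sum>m<N. c m * (\<integral>\<omega>. X \<omega> * indicator {m} (i t \<omega>) \<partial>M))"
  proof (rule sum.cong[OF refl])
    fix m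
    have "(\<integral>\<omega>. Xm m \<omega> * Kf N p t ts (hm m) (i t \<omega>) \<partial>M) = (\<integral>\<omega>. c m * (X \<omega> * indicator {m} (i t \<omega>)) \<partial>M)"
      by (rule Bochner_Integration.integral_cong[OF refl]) (auto simp: Xm_def c_def indicator_def)
    also have "\<dots> = c m * (\<integral>\<omega>. X \<omega> * indicator {m} (i t \<omega>) \<partial>M)"
      by (rule integral_mult_right_zero)
    finally show "(\<integral>\<omega>. Xm m \<omega> * Kf N p t ts (hm m) (i t \<omega>) \<partial>M) = c m * (\<integral>\<omega>. X \<omega> * indicator {m} (i t \<omega>) \<partial>M)" .
  qed
  also have "\<dots> = (\<Sum>m<N. c m * (\<integral>\<omega>. X \<omega> * p s t (i s \<omega>) m \<partial>M))"
  proof (rule sum.cong[OF refl])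
    fix m assume "m \<in> {..<N}"
    then have mN: "m < N" by simp
    interpret Fs: sigma_finite_subalgebra M "Fi s" by (rule subalg_sigma_finite[OF Fi_sub[OF s0]])
    have "(\<integral>\<omega>. X \<omega> * indicator {m} (i t \<omega>) \<partial>M)
        = (\<integral>\<omega>. X \<omega> * real_cond_exp M (Fi s) (\<lambda>\<omega>. indicator {m} (i t \<omega>)) \<omega> \<partial>M)"
      by (rule Fs.real_cond_exp_intg(2)[symmetric]) (use integrable_mult_bdd[OF Xint ind_M, where C=1] Cons.prems(5) ind_M[of m] in \<open>auto simp: indicator_def\<close>)
    also have "\<dots> = (\<integral>\<omega>. X \<omega> * p s t (i s \<omega>) m \<partial>M)"
    proof (rule integral_cong_AE)
      show "(\<lambda>\<omega>. X \<omega> * real_cond_exp M (Fi s) (\<lambda>\<omega>. indicator {m} (i t \<omega>)) \<omega>) \<in> borel_measurable M"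
        using XM by measurable
      show "(\<lambda>\<omega>. X \<omega> * p s t (i s \<omega>) m) \<in> borel_measurable M"
        using XM fin_fun_meas[OF s0, of "\<lambda>l. p s t l m"] by (rule borel_measurable_times)
      show "AE \<omega> in M. X \<omega> * real_cond_exp M (Fi s) (\<lambda>\<omega>. indicator {m} (i t \<omega>)) \<omega> = X \<omega> * p s t (i s \<omega>) m"
        using pcond[OF s0 st mN] by eventually_elim simp
    qed
    finally show "c m * (\<integral>\<omega>. X \<omega> * indicator {m} (i t \<omega>) \<partial>M) = c m * (\<integral>\<omega>. X \<omega> * p s t (i s \<omega>) m \<partial>M)"
      by simp
  qed
  also have "\<dots> = (\<Sum>m<N. \<integral>\<omega>. c m * (X \<omega> * p s t (i s \<omega>) m) \<partial>M)"
    by (rule sum.cong[OF refl]) (rule integral_mult_right_zero[symmetric])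
  also have "\<dots> = (\<integral>\<omega>. (\<Sum>m<N. c m * (X \<omega> * p s t (i s \<omega>) m)) \<partial>M)"
  proof (rule Bochner_Integration.integral_sum[symmetric])
    fix m
    have "integrable M (\<lambda>\<omega>. X \<omega> * p s t (i s \<omega>) m)"
      by (rule integrable_mult_bdd[OF Xint fin_fun_meas[OF s0] fin_fun_bdd[OF _ s0]])
    then show "integrable M (\<lambda>\<omega>. c m * (X \<omega> * p s t (i s \<omega>) m))" by (rule integrable_mult_right)
  qed
  also have "\<dots> = (\<integral>\<omega>. X \<omega> * Kf N p s (t # ts) h (i s \<omega>) \<partial>M)"
    by (rule Bochner_Integration.integral_cong[OF refl]) (simp add: c_def hm_def[abs_def] sum_distrib_left ac_simps)
  finally show ?case .
qed

end

context sgp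
begin

lemma ind_int: "A \<in> sets M \<Longrightarrow> integrable M (indicator A :: 'w \<Rightarrow> real)"
  by (rule finite_measure.integrable_const_bound[where B=1]) (auto simp: finite_measure_axioms indicator_def)

lemma ind_theta_meas:
  assumes "\<theta> s \<in> borel_measurable F" "C \<in> sets borel"
  shows "(\<lambda>\<omega>. indicator C (\<theta> s \<omega>) :: real) \<in> borel_measurable F"
  using measurable_compose[OF assms(1) borel_measurable_indicator[OF assms(2)]] by (simp add: comp_def)

lemma cyl_case:
  assumes s0: "0 \<le> s" and A: "A \<in> sets (Fi s)" and B: "B \<in> Cyl s"
  shows "measure M (A \<inter> B) = (LINT \<omega>:B|M. real_cond_exp M (Gs s) (indicator A) \<omega>)"
proof -
  interpret Gs: sigma_finite_subalgebra M "Gs s" by (rule subalg_sigma_finite[OF Gs_sub[OF s0]])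
  define w where "w = real_cond_exp M (Gs s) (indicator A)"
  obtain C T R where Bd: "B = {\<omega>\<in>space M. \<theta> s \<omega> \<in> C \<and> restrict (\<lambda>\<tau>. i \<tau> \<omega>) T \<in> R}"
    and C: "C \<in> sets borel" and T: "finite T" "T \<subseteq> {s..}"
    using B unfolding Cyl_def by blast
  define ts where "ts = sorted_list_of_set T"
  define hR where "hR vs = (indicator R (rmap T vs) :: real)" for vs
  define Kv where "Kv l = Kf N p s ts hR l" for l
  have ts: "sorted ts" "\<forall>\<tau>\<in>set ts. s \<le> \<tau>" unfolding ts_def using T by auto
  have hR1: "\<bar>hR vs\<bar> \<le> 1" for vs unfolding hR_def by (simp add: indicator_def)
  have AM: "A \<in> sets M" using A Fi_sub[OF s0] unfolding subalgebra_def by auto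
  have indB: "indicator B \<omega> = indicator C (\<theta> s \<omega>) * hR (map (\<lambda>\<tau>. i \<tau> \<omega>) ts)" if "\<omega> \<in> space M" for \<omega>
    using that rmap_restrict[OF T(1), of "\<lambda>\<tau>. i \<tau> \<omega>"] unfolding Bd hR_def ts_def
    by (simp add: indicator_def)
  have indA_Fi: "indicator A \<in> borel_measurable (Fi s)" using A by simp
  have indC_Fi: "(\<lambda>\<omega>. indicator C (\<theta> s \<omega>) :: real) \<in> borel_measurable (Fi s)"
    by (rule ind_theta_meas[OF theta_Fi[OF s0] C])
  have indC_M: "(\<lambda>\<omega>. indicator C (\<theta> s \<omega>) :: real) \<in> borel_measurable M"
    by (rule ind_theta_meas[OF theta_M[OF s0] C])
  have wint: "integrable M w" unfolding w_def by (rule Gs.real_cond_exp_int(1)[OF ind_int[OF AM]])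
  have wGs: "w \<in> borel_measurable (Gs s)" unfolding w_def by simp
  have wFi: "w \<in> borel_measurable (Fi s)" by (rule measurable_from_subalg[OF Fi_Gs_sub[OF s0] wGs])
  have fGs: "(\<lambda>\<omega>. indicator C (\<theta> s \<omega>) * Kv (i s \<omega>)) \<in> borel_measurable (Gs s)"
  proof -
    have "(\<lambda>z::'a \<times> nat. indicator C (fst z) * Kv (snd z) :: real) \<in> borel_measurable SS"
      using C by measurable
    from measurable_compose[OF Z_Gs this] show ?thesis by simp
  qed
  have fM: "(\<lambda>\<omega>. indicator C (\<theta> s \<omega>) * Kv (i s \<omega>)) \<in> borel_measurable M"
    by (rule measurable_from_subalg[OF Gs_sub[OF s0] fGs])
  have X1int: "integrable M (\<lambda>\<omega>. indicator A \<omega> * indicator C (\<theta> s \<omega>) :: real)"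
    by (rule integrable_mult_bdd[OF ind_int[OF AM] indC_M, where C=1]) (simp add: indicator_def)
  have X2int: "integrable M (\<lambda>\<omega>. w \<omega> * indicator C (\<theta> s \<omega>))"
    by (rule integrable_mult_bdd[OF wint indC_M, where C=1]) (simp add: indicator_def)
  have "measure M (A \<inter> B) = (\<integral>\<omega>. indicator (A \<inter> B) \<omega> \<partial>M)"
    using sets.sets_into_space[OF AM] by (simp add: Int_absorb2 Int_assoc[symmetric] le_infI1)
  also have "\<dots> = (\<integral>\<omega>. (indicator A \<omega> * indicator C (\<theta> s \<omega>)) * hR (map (\<lambda>\<tau>. i \<tau> \<omega>) ts) \<partial>M)"
    by (rule Bochner_Integration.integral_cong[OF refl]) (simp add: indB indicator_inter_arith ac_simps)
  also have "\<dots> = (\<integral>\<omega>. (indicator A \<omega> * indicator C (\<theta> s \<omega>)) * Kv (i s \<omega>) \<partial>M)"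
    unfolding Kv_def
    by (rule cyl_exp[OF ts s0 X1int _ hR1]) (use indA_Fi indC_Fi in measurable)
  also have "\<dots> = (\<integral>\<omega>. (indicator C (\<theta> s \<omega>) * Kv (i s \<omega>)) * indicator A \<omega> \<partial>M)"
    by (simp add: ac_simps)
  also have "\<dots> = (\<integral>\<omega>. (indicator C (\<theta> s \<omega>) * Kv (i s \<omega>)) * w \<omega> \<partial>M)"
    unfolding w_def
  proof (rule Gs.real_cond_exp_intg(2)[symmetric, OF _ fGs])
    show "integrable M (\<lambda>\<omega>. indicator C (\<theta> s \<omega>) * Kv (i s \<omega>) * indicator A \<omega>)"
      using integrable_mult_bdd[OF X1int fin_fun_meas[OF s0, of Kv] fin_fun_bdd[OF _ s0]]
      by (simp add: ac_simps)
    show "indicator A \<in> borel_measurable M" using AM by simp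
  qed
  also have "\<dots> = (\<integral>\<omega>. (w \<omega> * indicator C (\<theta> s \<omega>)) * Kv (i s \<omega>) \<partial>M)"
    by (simp add: ac_simps)
  also have "\<dots> = (\<integral>\<omega>. (w \<omega> * indicator C (\<theta> s \<omega>)) * hR (map (\<lambda>\<tau>. i \<tau> \<omega>) ts) \<partial>M)"
    unfolding Kv_def
    by (rule cyl_exp[symmetric, OF ts s0 X2int _ hR1]) (use wFi indC_Fi in measurable)
  also have "\<dots> = (LINT \<omega>:B|M. w \<omega>)"
    unfolding set_lebesgue_integral_def
    by (rule Bochner_Integration.integral_cong[OF refl]) (simp add: indB ac_simps)
  finally show ?thesis unfolding w_def .
qed

end

context sgp
begin

lemma Cyl_Int_stable: "Int_stable (Cyl s)"
proof (rule Int_stableI)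
  fix a b assume "a \<in> Cyl s" "b \<in> Cyl s"
  then obtain C1 T1 R1 C2 T2 R2 where
    a: "a = {\<omega>\<in>space M. \<theta> s \<omega> \<in> C1 \<and> restrict (\<lambda>\<tau>. i \<tau> \<omega>) T1 \<in> R1}"
    and b: "b = {\<omega>\<in>space M. \<theta> s \<omega> \<in> C2 \<and> restrict (\<lambda>\<tau>. i \<tau> \<omega>) T2 \<in> R2}"
    and C: "C1 \<in> sets borel" "C2 \<in> sets borel" and T: "finite T1" "T1 \<subseteq> {s..}" "finite T2" "T2 \<subseteq> {s..}"
    unfolding Cyl_def by blast
  have "a \<inter> b = {\<omega>\<in>space M. \<theta> s \<omega> \<in> C1 \<inter> C2 \<and> restrict (\<lambda>\<tau>. i \<tau> \<omega>) (T1 \<union> T2)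
      \<in> {f. restrict f T1 \<in> R1 \<and> restrict f T2 \<in> R2}}"
    unfolding a b by (auto simp: restrict_restrict Int_absorb1)
  also have "\<dots> \<in> Cyl s" by (rule cylI) (use C T in auto)
  finally show "a \<inter> b \<in> Cyl s" .
qed

lemma set_eq:
  assumes s0: "0 \<le> s" and A: "A \<in> sets (Fi s)" and B: "B \<in> sets (H s)"
  shows "measure M (A \<inter> B) = (LINT \<omega>:B|M. real_cond_exp M (Gs s) (indicator A) \<omega>)"
proof -
  interpret Gs: sigma_finite_subalgebra M "Gs s" by (rule subalg_sigma_finite[OF Gs_sub[OF s0]])
  define w where "w = real_cond_exp M (Gs s) (indicator A)"
  have AM: "A \<in> sets M" using A Fi_sub[OF s0] unfolding subalgebra_def by auto
  have wint: "integrable M w" unfolding w_def by (rule Gs.real_cond_exp_int(1)[OF ind_int[OF AM]])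
  have wA: "(\<integral>\<omega>. w \<omega> \<partial>M) = measure M A"
    unfolding w_def Gs.real_cond_exp_int(2)[OF ind_int[OF AM]]
    using sets.sets_into_space[OF AM] by (simp add: Int_absorb2)
  have HM: "sigma_sets (space M) (Cyl s) \<subseteq> sets M"
    using H_sub[OF s0] unfolding subalgebra_def H_sets by simp
  have B': "B \<in> sigma_sets (space M) (Cyl s)" using B unfolding H_sets .
  from Cyl_Int_stable Cyl_pow B' show ?thesis unfolding w_def[symmetric]
  proof (induction rule: sigma_sets_induct_disjoint)
    case (basic B) then show ?case unfolding w_def by (rule cyl_case[OF s0 A])
  next
    case empty then show ?case by (simp add: set_lebesgue_integral_def)
  next
    case (compl B)
    have BM: "B \<in> sets M" using compl.hyps HM by auto
    have "measure M (A \<inter> (space M - B)) = measure M (A - A \<inter> B)"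
      using sets.sets_into_space[OF AM] by (intro arg_cong[where f="measure M"]) auto
    also have "\<dots> = measure M A - measure M (A \<inter> B)"
      by (rule finite_measure_Diff) (use AM BM in auto)
    also have "\<dots> = (\<integral>\<omega>. w \<omega> \<partial>M) - (LINT \<omega>:B|M. w \<omega>)" using wA compl.IH by simp
    also have "\<dots> = (\<integral>\<omega>. w \<omega> - w \<omega> * indicator B \<omega> \<partial>M)"
      unfolding set_lebesgue_integral_def real_scaleR_def mult.commute[of "indicator B _"]
      by (rule Bochner_Integration.integral_diff[symmetric, OF wint])
         (rule integrable_mult_bdd[OF wint, of _ 1], use BM in \<open>auto simp: indicator_def\<close>)
    also have "\<dots> = (LINT \<omega>:(space M - B)|M. w \<omega>)"
      unfolding set_lebesgue_integral_def
      by (rule Bochner_Integration.integral_cong[OF refl]) (auto simp: indicator_def)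
    finally show ?case .
  next
    case (union F)
    have FM: "\<And>k. F k \<in> sets M" using union.hyps(2) HM by auto
    have disj: "\<And>k l. k \<noteq> l \<Longrightarrow> F k \<inter> F l = {}" using union.hyps(1) unfolding disjoint_family_on_def by auto
    have s1: "(\<lambda>k. measure M (A \<inter> F k)) sums measure M (\<Union>k. A \<inter> F k)"
      by (rule finite_measure_UNION) (use AM FM union.hyps(1) in \<open>auto simp: disjoint_family_on_def\<close>)
    have "(LINT \<omega>:(\<Union>k. F k)|M. w \<omega>) = (\<Sum>k. (LINT \<omega>:(F k)|M. w \<omega>))"
    proof (rule lebesgue_integral_countable_add[OF FM disj])
      have "(\<Union>k. F k) \<in> sets M" using FM by auto
      then show "set_integrable M (\<Union>k. F k) w"
        unfolding set_integrable_def using integrable_mult_indicator[OF _ wint] by simp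
    qed
    also have "\<dots> = (\<Sum>k. measure M (A \<inter> F k))" using union.IH by simp
    also have "\<dots> = measure M (\<Union>k. A \<inter> F k)" using s1 by (simp add: sums_iff)
    finally show ?case by simp
  qed
qed

lemma markov_step:
  assumes s0: "0 \<le> s" and st: "s \<le> t" and f: "f \<in> borel_measurable SS" "bounded (f ` space SS)"
  shows "AE \<omega> in M. real_cond_exp M (FZ s) (\<lambda>\<omega>. f (Z t \<omega>)) \<omega> = real_cond_exp M (Gs s) (\<lambda>\<omega>. f (Z t \<omega>)) \<omega>"
proof -
  have t0: "0 \<le> t" using s0 st by simp
  interpret Gs: sigma_finite_subalgebra M "Gs s" by (rule subalg_sigma_finite[OF Gs_sub[OF s0]])
  interpret FZ: sigma_finite_subalgebra M "FZ s" by (rule subalg_sigma_finite[OF FZ_sub[OF s0]])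
  interpret Hs: sigma_finite_subalgebra M "H s" by (rule subalg_sigma_finite[OF H_sub[OF s0]])
  define V where "V \<omega> = f (Z t \<omega>)" for \<omega>
  obtain Bd where Bd: "\<And>z. z \<in> space SS \<Longrightarrow> norm (f z) \<le> Bd" using f(2) unfolding bounded_iff by auto
  have VB: "\<bar>V \<omega>\<bar> \<le> Bd" for \<omega> unfolding V_def using Bd[of "Z t \<omega>"] by (simp add: space_pair_measure)
  have VH: "V \<in> borel_measurable (H s)" unfolding V_def
    using measurable_compose[OF Z_H[OF s0 st] f(1)] by (simp add: comp_def)
  have VM: "V \<in> borel_measurable M" by (rule measurable_from_subalg[OF H_sub[OF s0] VH])
  have Vint: "integrable M V"
    by (rule finite_measure.integrable_const_bound[where B=Bd]) (use VB VM finite_measure_axioms in auto)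
  define EV where "EV = real_cond_exp M (Gs s) V"
  have EVint: "integrable M EV" unfolding EV_def by (rule Gs.real_cond_exp_int(1)[OF Vint])
  have EVGs: "EV \<in> borel_measurable (Gs s)" unfolding EV_def by simp
  have key: "(LINT \<omega>:A|M. V \<omega>) = (LINT \<omega>:A|M. EV \<omega>)" if AFZ: "A \<in> sets (FZ s)" for A
  proof -
    have A: "A \<in> sets (Fi s)" using AFZ FZ_Fi[OF s0] by auto
    have AM: "A \<in> sets M" using A Fi_sub[OF s0] unfolding subalgebra_def by auto
    define w where "w = real_cond_exp M (Gs s) (indicator A)"
    have wint: "integrable M w" unfolding w_def by (rule Gs.real_cond_exp_int(1)[OF ind_int[OF AM]])
    have wGs: "w \<in> borel_measurable (Gs s)" unfolding w_def by simp
    have wH: "w \<in> borel_measurable (H s)" by (rule measurable_from_subalg[OF H_Gs_sub[OF s0] wGs])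
    have Hce: "AE \<omega> in M. real_cond_exp M (H s) (indicator A) \<omega> = w \<omega>"
    proof (rule Hs.real_cond_exp_charact)
      fix B assume B: "B \<in> sets (H s)"
      have BM: "B \<in> sets M" using B H_sub[OF s0] unfolding subalgebra_def by auto
      have "(LINT \<omega>:B|M. (indicator A \<omega>::real)) = (\<integral>\<omega>. indicator (A \<inter> B) \<omega> \<partial>M)"
        unfolding set_lebesgue_integral_def
        by (rule Bochner_Integration.integral_cong[OF refl]) (simp add: indicator_inter_arith ac_simps real_scaleR_def)
      also have "\<dots> = measure M (A \<inter> B)"
        using sets.sets_into_space[OF AM] by (simp add: Int_absorb2 Int_assoc[symmetric] le_infI1)
      also have "\<dots> = (LINT \<omega>:B|M. w \<omega>)" unfolding w_def by (rule set_eq[OF s0 A B])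
      finally show "(LINT \<omega>:B|M. indicator A \<omega>) = (LINT \<omega>:B|M. w \<omega>)" .
    qed (use ind_int[OF AM] wint wH in auto)
    have "(LINT \<omega>:A|M. V \<omega>) = (\<integral>\<omega>. V \<omega> * indicator A \<omega> \<partial>M)"
      unfolding set_lebesgue_integral_def by (simp add: ac_simps)
    also have "\<dots> = (\<integral>\<omega>. V \<omega> * real_cond_exp M (H s) (indicator A) \<omega> \<partial>M)"
      by (rule Hs.real_cond_exp_intg(2)[symmetric, OF _ VH])
         (use integrable_mult_bdd[OF ind_int[OF AM] VM VB] AM in \<open>auto simp: ac_simps\<close>)
    also have "\<dots> = (\<integral>\<omega>. w \<omega> * V \<omega> \<partial>M)"
    proof (rule integral_cong_AE)
      show "(\<lambda>\<omega>. V \<omega> * real_cond_exp M (H s) (indicator A) \<omega>) \<in> borel_measurable M"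
        using VM by measurable
      show "(\<lambda>\<omega>. w \<omega> * V \<omega>) \<in> borel_measurable M"
        using VM wint by measurable
      show "AE \<omega> in M. V \<omega> * real_cond_exp M (H s) (indicator A) \<omega> = w \<omega> * V \<omega>"
        using Hce by eventually_elim simp
    qed
    also have "\<dots> = (\<integral>\<omega>. w \<omega> * EV \<omega> \<partial>M)"
      unfolding EV_def
      by (rule Gs.real_cond_exp_intg(2)[symmetric, OF _ wGs VM])
         (rule integrable_mult_bdd[OF wint VM VB])
    also have "\<dots> = (\<integral>\<omega>. EV \<omega> * w \<omega> \<partial>M)" by (simp add: ac_simps)
    also have "\<dots> = (\<integral>\<omega>. EV \<omega> * indicator A \<omega> \<partial>M)"
      unfolding w_def
      by (rule Gs.real_cond_exp_intg(2)[OF _ EVGs])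
         (use integrable_mult_bdd[OF EVint, of "indicator A" 1] AM in \<open>auto simp: indicator_def\<close>)
    also have "\<dots> = (LINT \<omega>:A|M. EV \<omega>)"
      unfolding set_lebesgue_integral_def by (simp add: ac_simps)
    finally show ?thesis .
  qed
  have EVFZ: "EV \<in> borel_measurable (FZ s)" by (rule measurable_from_subalg[OF FZ_Gs_sub[OF s0] EVGs])
  have "AE \<omega> in M. real_cond_exp M (FZ s) V \<omega> = EV \<omega>"
    by (rule FZ.real_cond_exp_charact[OF key Vint EVint EVFZ])
  then show ?thesis unfolding V_def EV_def .
qed

lemma markov: "markov_process M SS Z"
  unfolding markov_process_def using Z_M markov_step by auto

end

lemma markov_from_ctmc:
  fixes G :: "nat \<Rightarrow> 'a::euclidean_space \<Rightarrow> 'a" and \<theta> :: "real \<Rightarrow> 'w \<Rightarrow> 'a" and i :: "real \<Rightarrow> 'w \<Rightarrow> nat"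
  assumes M: "prob_space M" and ch: "ctmc M N q i"
    and cont: "\<And>n. n < N \<Longrightarrow> continuous_on UNIV (G n)"
    and lip: "\<And>n. n < N \<Longrightarrow> loc_lipschitz (G n)"
    and ode: "\<And>\<omega> t. \<omega> \<in> space M \<Longrightarrow> t \<ge> 0 \<Longrightarrow>
         ((\<lambda>s. G (i s \<omega>) (\<theta> s \<omega>)) has_integral (\<theta>0 - \<theta> t \<omega>)) {0..t}"
  shows "markov_process M (borel \<Otimes>\<^sub>M count_space UNIV) (\<lambda>t \<omega>. (\<theta> t \<omega>, i t \<omega>))"
proof -
  have i_meas: "\<And>t. t \<ge> 0 \<Longrightarrow> i t \<in> measurable M (count_space UNIV)"
    and iN: "\<And>\<omega> t. \<omega> \<in> space M \<Longrightarrow> t \<ge> 0 \<Longrightarrow> i t \<omega> < N"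
    and cad: "\<And>\<omega>. \<omega> \<in> space M \<Longrightarrow> cadlag_discrete (\<lambda>t. i t \<omega>)"
    using ch unfolding ctmc_def by auto
  have right: "\<And>\<omega> t. \<omega> \<in> space M \<Longrightarrow> t \<ge> 0 \<Longrightarrow> \<exists>e>0. \<forall>u\<in>{t..<t+e}. i u \<omega> = i t \<omega>"
    using cad unfolding cadlag_discrete_def by blast
  obtain p where pcond: "\<And>s t l. 0 \<le> s \<Longrightarrow> s \<le> t \<Longrightarrow> l < N \<Longrightarrow>
       AE \<omega> in M. real_cond_exp M (natural_filtration M (count_space UNIV) i s)
                   (\<lambda>\<omega>. indicator {l} (i t \<omega>)) \<omega> = p s t (i s \<omega>) l"
    using ch unfolding ctmc_def by blast
  interpret sgp M N p i \<theta> G \<theta>0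
    by (intro sgp.intro[OF M] sgp_axioms.intro) (use i_meas iN right pcond cont lip ode in auto)
  show ?thesis by (rule markov)
qed

theorem proposition3:
  fixes N :: nat
    and \<Phi> :: "nat \<Rightarrow> real ^ 'k \<Rightarrow> real"
    and G :: "nat \<Rightarrow> real ^ 'k \<Rightarrow> real ^ 'k"
    and M :: "'w measure" and M' :: "'v measure"
    and lam :: real and \<mu> \<mu>' :: "real \<Rightarrow> real"
    and \<theta>\<^sub>0 \<xi>\<^sub>0 :: "real ^ 'k"
    and i :: "real \<Rightarrow> 'w \<Rightarrow> nat" and \<theta> :: "real \<Rightarrow> 'w \<Rightarrow> real ^ 'k"
    and j :: "real \<Rightarrow> 'v \<Rightarrow> nat" and \<xi> :: "real \<Rightarrow> 'v \<Rightarrow> real ^ 'k"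
  assumes N2: "N \<ge> 2"
    and grad: "\<And>n x. n < N \<Longrightarrow> (\<Phi> n has_derivative (\<lambda>h. G n x \<bullet> h)) (at x)"
    and grad_cont: "\<And>n. n < N \<Longrightarrow> continuous_on UNIV (G n)"
    and grad_lip: "\<And>n. n < N \<Longrightarrow> loc_lipschitz (G n)"
    and M: "prob_space M"
    and lam: "lam > 0"
    and i_chain: "ctmc M N (\<lambda>_. uniform_rates N lam) i"
    and \<theta>_ode: "\<And>\<omega> t. \<omega> \<in> space M \<Longrightarrow> t \<ge> 0 \<Longrightarrow>
         ((\<lambda>s. G (i s \<omega>) (\<theta> s \<omega>)) has_integral (\<theta>\<^sub>0 - \<theta> t \<omega>)) {0..t}"
    and M': "prob_space M'"
    and mu_pos: "\<And>t. t \<ge> 0 \<Longrightarrow> \<mu> t > 0"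
    and mu_mono: "mono_on {0..} \<mu>"
    and mu_deriv: "\<And>t. t \<ge> 0 \<Longrightarrow> (\<mu> has_real_derivative \<mu>' t) (at t within {0..})"
    and mu'_cont: "continuous_on {0..} \<mu>'"
    and mu_lim: "filterlim \<mu> at_top at_top"
    and mu_bound: "\<And>tb. tb \<ge> 0 \<Longrightarrow> \<exists>C. \<forall>t\<in>{0..tb}. \<bar>\<mu>' t\<bar> \<le> C * \<mu> t"
    and j_chain: "ctmc M' N (\<lambda>t. uniform_rates N (\<mu> t)) j"
    and \<xi>_ode: "\<And>\<omega> t. \<omega> \<in> space M' \<Longrightarrow> t \<ge> 0 \<Longrightarrow>
         ((\<lambda>s. G (j s \<omega>) (\<xi> s \<omega>)) has_integral (\<xi>\<^sub>0 - \<xi> t \<omega>)) {0..t}"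
  shows "markov_process M (borel \<Otimes>\<^sub>M count_space UNIV) (\<lambda>t \<omega>. (\<theta> t \<omega>, i t \<omega>))
       \<and> markov_process M' (borel \<Otimes>\<^sub>M count_space UNIV) (\<lambda>t \<omega>. (\<xi> t \<omega>, j t \<omega>))"
proof
  show "markov_process M (borel \<Otimes>\<^sub>M count_space UNIV) (\<lambda>t \<omega>. (\<theta> t \<omega>, i t \<omega>))"
    by (rule markov_from_ctmc[OF M i_chain grad_cont grad_lip \<theta>_ode])
  show "markov_process M' (borel \<Otimes>\<^sub>M count_space UNIV) (\<lambda>t \<omega>. (\<xi> t \<omega>, j t \<omega>))"
    by (rule markov_from_ctmc[OF M' j_chain grad_cont grad_lip \<xi>_ode])
qed

end
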